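(* A subset $\mathcal R$ of $\mathcal G$ is a $Z$-regulus if and only if the following three conditions hold: (D1) the elements of $\mathcal R$ are mutually distant and $|\mathcal R|\ge 3$; (D2) whenever $E_0,E_1,E_2\in\mathcal R$ are mutually distinct and $W\in\mathcal G$ is adjacent to $E_0$ and not distant from $E_1$ and not distant from $E_2$, then $W$ is not distant from any $E\in\mathcal R$; (D3) $\mathcal R$ is not properly contained in any subset of $\mathcal G$ satisfying (D1) and (D2).
   Context: $K$ is a (not necessarily commutative) field with centre $Z$, and $V$ is a left vector space over $K$ of arbitrary (possibly infinite) dimension with $\dim V>2$. $\mathcal G:=\{X\le V\mid X\cong V/X\}$, assumed nonempty. Points are $1$-dimensional and lines $2$-dimensional subspaces; two subspaces meet if they have a common point. $X,Y\in\mathcal G$ are adjacent if $\dim((X+Y)/X)=\dim((X+Y)/Y)=1$, and distant if $V=X\oplus Y$. A $Z$-regulus is a subset $\mathcal R\subseteq\mathcal G$ such that (R1) its elements are mutually distant and $|\mathcal R|\ge3$; (R2) if a line meets three mutually distinct elements of $\mathcal R$ then it meets all elements of $\mathcal R$; (R3) $\mathcal R$ is not properly contained in any subset of $\mathcal G$ satisfying (R1) and (R2). *)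

theory Defs
  imports Main
begin

text \<open>A left vector space V (the whole type 'v) over a (not necessarily commutative)
  field K, i.e. a division ring 'k.\<close>

definition left_vector_space :: "('k::division_ring \<Rightarrow> 'v::ab_group_add \<Rightarrow> 'v) \<Rightarrow> bool" where
  "left_vector_space scale \<longleftrightarrow>
     (\<forall>a x y. scale a (x + y) = scale a x + scale a y) \<and>
     (\<forall>a b x. scale (a + b) x = scale a x + scale b x) \<and>
     (\<forall>a b x. scale a (scale b x) = scale (a * b) x) \<and>
     (\<forall>x. scale 1 x = x)"

definition subspace :: "('k::division_ring \<Rightarrow> 'v::ab_group_add \<Rightarrow> 'v) \<Rightarrow> 'v set \<Rightarrow> bool" where
  "subspace scale X \<longleftrightarrow> 0 \<in> X \<and> (\<forall>x\<in>X. \<forall>y\<in>X. x + y \<in> X) \<and> (\<forall>a. \<forall>x\<in>X. scale a x \<in> X)"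

definition dim_gt_2 :: "('k::division_ring \<Rightarrow> 'v::ab_group_add \<Rightarrow> 'v) \<Rightarrow> bool" where
  "dim_gt_2 scale \<longleftrightarrow> (\<exists>u v w. \<forall>a b c. scale a u + scale b v + scale c w = 0 \<longrightarrow> a = 0 \<and> b = 0 \<and> c = 0)"

definition ssum :: "'v::ab_group_add set \<Rightarrow> 'v set \<Rightarrow> 'v set" where
  "ssum X Y = {x + y | x y. x \<in> X \<and> y \<in> Y}"

definition span1 :: "('k::division_ring \<Rightarrow> 'v::ab_group_add \<Rightarrow> 'v) \<Rightarrow> 'v \<Rightarrow> 'v set" where
  "span1 scale v = range (\<lambda>a. scale a v)"

text \<open>Quotient space V/X: cosets with the induced operations.\<close>
definition cosets :: "'v::ab_group_add set \<Rightarrow> 'v set set" where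
  "cosets X = {(\<lambda>x. v + x) ` X | v. True}"

definition qadd :: "'v::ab_group_add set \<Rightarrow> 'v set \<Rightarrow> 'v set" where
  "qadd C D = {c + d | c d. c \<in> C \<and> d \<in> D}"

definition qscale :: "('k::division_ring \<Rightarrow> 'v::ab_group_add \<Rightarrow> 'v) \<Rightarrow> 'v set \<Rightarrow> 'k \<Rightarrow> 'v set \<Rightarrow> 'v set" where
  "qscale scale X a C = {scale a c + x | c x. c \<in> C \<and> x \<in> X}"

definition iso_quot :: "('k::division_ring \<Rightarrow> 'v::ab_group_add \<Rightarrow> 'v) \<Rightarrow> 'v set \<Rightarrow> bool" where
  "iso_quot scale X \<longleftrightarrow> (\<exists>g. bij_betw g X (cosets X) \<and>
      (\<forall>x\<in>X. \<forall>y\<in>X. g (x + y) = qadd (g x) (g y)) \<and>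
      (\<forall>a. \<forall>x\<in>X. g (scale a x) = qscale scale X a (g x)))"

definition Gr :: "('k::division_ring \<Rightarrow> 'v::ab_group_add \<Rightarrow> 'v) \<Rightarrow> 'v set set" where
  "Gr scale = {X. subspace scale X \<and> iso_quot scale X}"

definition is_point :: "('k::division_ring \<Rightarrow> 'v::ab_group_add \<Rightarrow> 'v) \<Rightarrow> 'v set \<Rightarrow> bool" where
  "is_point scale P \<longleftrightarrow> (\<exists>v. v \<noteq> 0 \<and> P = span1 scale v)"

definition is_line :: "('k::division_ring \<Rightarrow> 'v::ab_group_add \<Rightarrow> 'v) \<Rightarrow> 'v set \<Rightarrow> bool" where
  "is_line scale L \<longleftrightarrow> (\<exists>u v. (\<forall>a b. scale a u + scale b v = 0 \<longrightarrow> a = 0 \<and> b = 0) \<and>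
      L = {scale a u + scale b v | a b. True})"

definition meets :: "('k::division_ring \<Rightarrow> 'v::ab_group_add \<Rightarrow> 'v) \<Rightarrow> 'v set \<Rightarrow> 'v set \<Rightarrow> bool" where
  "meets scale X Y \<longleftrightarrow> (\<exists>P. is_point scale P \<and> P \<subseteq> X \<and> P \<subseteq> Y)"

text \<open>dim((X+Y)/X) = 1\<close>
definition quot_dim1 :: "('k::division_ring \<Rightarrow> 'v::ab_group_add \<Rightarrow> 'v) \<Rightarrow> 'v set \<Rightarrow> 'v set \<Rightarrow> bool" where
  "quot_dim1 scale X Y \<longleftrightarrow> (\<exists>v. v \<notin> X \<and> ssum X Y = ssum X (span1 scale v))"

definition adjacent :: "('k::division_ring \<Rightarrow> 'v::ab_group_add \<Rightarrow> 'v) \<Rightarrow> 'v set \<Rightarrow> 'v set \<Rightarrow> bool" where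
  "adjacent scale X Y \<longleftrightarrow> quot_dim1 scale X Y \<and> quot_dim1 scale Y X"

definition distant :: "'v::ab_group_add set \<Rightarrow> 'v set \<Rightarrow> bool" where
  "distant X Y \<longleftrightarrow> ssum X Y = UNIV \<and> X \<inter> Y = {0}"

definition at_least_3 :: "'a set \<Rightarrow> bool" where
  "at_least_3 R \<longleftrightarrow> (\<exists>a\<in>R. \<exists>b\<in>R. \<exists>c\<in>R. a \<noteq> b \<and> a \<noteq> c \<and> b \<noteq> c)"

definition R1 :: "'v::ab_group_add set set \<Rightarrow> bool" where
  "R1 R \<longleftrightarrow> (\<forall>X\<in>R. \<forall>Y\<in>R. X \<noteq> Y \<longrightarrow> distant X Y) \<and> at_least_3 R"

definition R2 :: "('k::division_ring \<Rightarrow> 'v::ab_group_add \<Rightarrow> 'v) \<Rightarrow> 'v set set \<Rightarrow> bool" where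
  "R2 scale R \<longleftrightarrow> (\<forall>L. is_line scale L \<longrightarrow>
     (\<forall>E0\<in>R. \<forall>E1\<in>R. \<forall>E2\<in>R. E0 \<noteq> E1 \<and> E0 \<noteq> E2 \<and> E1 \<noteq> E2 \<and>
        meets scale L E0 \<and> meets scale L E1 \<and> meets scale L E2 \<longrightarrow> (\<forall>E\<in>R. meets scale L E)))"

definition Z_regulus :: "('k::division_ring \<Rightarrow> 'v::ab_group_add \<Rightarrow> 'v) \<Rightarrow> 'v set set \<Rightarrow> bool" where
  "Z_regulus scale R \<longleftrightarrow> R \<subseteq> Gr scale \<and> R1 R \<and> R2 scale R \<and>
     \<not> (\<exists>S. R \<subset> S \<and> S \<subseteq> Gr scale \<and> R1 S \<and> R2 scale S)"

definition D1 :: "'v::ab_group_add set set \<Rightarrow> bool" where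
  "D1 R \<longleftrightarrow> R1 R"

definition D2 :: "('k::division_ring \<Rightarrow> 'v::ab_group_add \<Rightarrow> 'v) \<Rightarrow> 'v set set \<Rightarrow> bool" where
  "D2 scale R \<longleftrightarrow> (\<forall>E0\<in>R. \<forall>E1\<in>R. \<forall>E2\<in>R. E0 \<noteq> E1 \<and> E0 \<noteq> E2 \<and> E1 \<noteq> E2 \<longrightarrow>
     (\<forall>W\<in>Gr scale. adjacent scale W E0 \<and> \<not> distant W E1 \<and> \<not> distant W E2 \<longrightarrow>
        (\<forall>E\<in>R. \<not> distant W E)))"

definition D3 :: "('k::division_ring \<Rightarrow> 'v::ab_group_add \<Rightarrow> 'v) \<Rightarrow> 'v set set \<Rightarrow> bool" where
  "D3 scale R \<longleftrightarrow> \<not> (\<exists>S. R \<subset> S \<and> S \<subseteq> Gr scale \<and> D1 S \<and> D2 scale S)"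

end

theory Submission
  imports Defs
begin

locale lvs =
  fixes scale :: "'k::division_ring \<Rightarrow> 'v::ab_group_add \<Rightarrow> 'v"
  assumes lvs: "left_vector_space scale"
begin

lemma sadd: "scale a (x + y) = scale a x + scale a y"
  using lvs unfolding left_vector_space_def by blast
lemma saddl: "scale (a + b) x = scale a x + scale b x"
  using lvs unfolding left_vector_space_def by blast
lemma sassoc[simp]: "scale a (scale b x) = scale (a * b) x"
  using lvs unfolding left_vector_space_def by blast
lemma sone[simp]: "scale 1 x = x"
  using lvs unfolding left_vector_space_def by blast
lemma szl[simp]: "scale 0 x = 0"
  using saddl[of 0 0 x] by simp
lemma szr[simp]: "scale a 0 = 0"
  using sadd[of a 0 0] by simp
lemma sminl: "scale (-a) x = - scale a x"
proof -
  have h: "scale a x + scale (-a) x = 0" using saddl[of a "-a" x] by simp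
  have "- scale a x = scale (-a) x" using h by (simp only: neg_eq_iff_add_eq_0)
  then show ?thesis by (rule sym)
qed
lemma sminr: "scale a (-x) = - scale a x"
proof -
  have h: "scale a x + scale a (-x) = 0" using sadd[of a x "-x"] by simp
  have "- scale a x = scale a (-x)" using h by (simp only: neg_eq_iff_add_eq_0)
  then show ?thesis by (rule sym)
qed
lemma sdiff: "scale a (x - y) = scale a x - scale a y"
  by (simp only: diff_conv_add_uminus sadd sminr)
lemma sdiffl: "scale (a - b) x = scale a x - scale b x"
  by (simp only: diff_conv_add_uminus saddl sminl)
lemma sinv: "a \<noteq> 0 \<Longrightarrow> scale (inverse a) (scale a x) = x"
  by simp
lemma seq0[simp]: "scale a x = 0 \<longleftrightarrow> a = 0 \<or> x = 0"
proof
  assume h: "scale a x = 0"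
  show "a = 0 \<or> x = 0"
  proof (cases "a = 0")
    case False then have "x = scale (inverse a) (scale a x)" using sinv by simp
    then show ?thesis using h by simp
  qed simp
qed auto

lemmas salg = sadd saddl sminl sminr sdiff sdiffl

lemma sub0: "subspace scale X \<Longrightarrow> 0 \<in> X" unfolding subspace_def by blast
lemma subadd: "subspace scale X \<Longrightarrow> x \<in> X \<Longrightarrow> y \<in> X \<Longrightarrow> x + y \<in> X" unfolding subspace_def by blast
lemma subsc: "subspace scale X \<Longrightarrow> x \<in> X \<Longrightarrow> scale a x \<in> X" unfolding subspace_def by blast
lemma subneg: "subspace scale X \<Longrightarrow> x \<in> X \<Longrightarrow> - x \<in> X"
  using subsc[of X x "-1"] by (simp add: sminl)
lemma subdiff: "subspace scale X \<Longrightarrow> x \<in> X \<Longrightarrow> y \<in> X \<Longrightarrow> x - y \<in> X"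
  unfolding diff_conv_add_uminus by (intro subadd subneg)

lemma zorn_hyp:
  assumes A: "subspace scale A" and z: "z \<notin> A"
  shows "\<exists>P. subspace scale P \<and> A \<subseteq> P \<and> z \<notin> P \<and> (\<forall>x. \<exists>\<alpha>. x - scale \<alpha> z \<in> P)"
proof -
  define F where "F = {P. subspace scale P \<and> A \<subseteq> P \<and> z \<notin> P}"
  have "\<exists>M\<in>F. \<forall>X\<in>F. M \<subseteq> X \<longrightarrow> X = M"
  proof (rule subset_Zorn_nonempty)
    show "F \<noteq> {}" using A z unfolding F_def by blast
  next
    fix C assume ne: "C \<noteq> {}" and ch: "subset.chain F C"
    have CF: "C \<subseteq> F" and cmp: "\<forall>X\<in>C. \<forall>Y\<in>C. X \<subseteq> Y \<or> Y \<subseteq> X"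
      using ch unfolding subset.chain_def by auto
    have "subspace scale (\<Union>C)"
      unfolding subspace_def
    proof (intro conjI ballI allI)
      show "0 \<in> \<Union>C" using ne CF unfolding F_def by (auto dest: sub0)
    next
      fix x y assume "x \<in> \<Union>C" "y \<in> \<Union>C"
      then obtain X Y where XY: "X \<in> C" "Y \<in> C" "x \<in> X" "y \<in> Y" by blast
      show "x + y \<in> \<Union>C"
      proof (cases "X \<subseteq> Y")
        case True then have "x + y \<in> Y" using XY CF unfolding F_def by (auto intro: subadd)
        then show ?thesis using XY by blast
      next
        case False then have "Y \<subseteq> X" using cmp XY by blast
        then have "x + y \<in> X" using XY CF unfolding F_def by (auto intro: subadd)
        then show ?thesis using XY by blast
      qed
    next
      fix a x assume "x \<in> \<Union>C"
      then show "scale a x \<in> \<Union>C" using CF unfolding F_def by (auto dest: subsc)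
    qed
    then show "\<Union>C \<in> F" using ne CF unfolding F_def by auto
  qed
  then obtain M where MF: "M \<in> F" and max: "\<forall>X\<in>F. M \<subseteq> X \<longrightarrow> X = M" by blast
  have Ms: "subspace scale M" "A \<subseteq> M" "z \<notin> M" using MF unfolding F_def by auto
  have "\<exists>\<alpha>. x - scale \<alpha> z \<in> M" for x
  proof (cases "x \<in> M")
    case True then show ?thesis by (rule_tac x=0 in exI) simp
  next
    case False
    define M' where "M' = {m + scale b x | m b. m \<in> M}"
    have sM': "subspace scale M'"
      unfolding subspace_def M'_def
    proof (intro conjI ballI allI)
      show "0 \<in> {m + scale b x |m b. m \<in> M}" using Ms(1) by (force dest: sub0)
    next
      fix p q assume "p \<in> {m + scale b x |m b. m \<in> M}" "q \<in> {m + scale b x |m b. m \<in> M}"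
      then obtain m1 b1 m2 b2 where "p = m1 + scale b1 x" "q = m2 + scale b2 x" "m1 \<in> M" "m2 \<in> M" by blast
      moreover have "p + q = (m1+m2) + scale (b1+b2) x" using calculation by (simp add: saddl algebra_simps)
      ultimately show "p + q \<in> {m + scale b x |m b. m \<in> M}" using subadd[OF Ms(1)] by blast
    next
      fix a p assume "p \<in> {m + scale b x |m b. m \<in> M}"
      then obtain m1 b1 where "p = m1 + scale b1 x" "m1 \<in> M" by blast
      moreover have "scale a p = scale a m1 + scale (a*b1) x" using calculation by (simp add: sadd)
      ultimately show "scale a p \<in> {m + scale b x |m b. m \<in> M}" using subsc[OF Ms(1)] by blast
    qed
    have "M \<subseteq> M'" unfolding M'_def by (force intro: exI[of _ 0])
    moreover have "x \<in> M'" unfolding M'_def using sub0[OF Ms(1)] by (force intro: exI[of _ 1])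
    ultimately have "M' \<notin> F" using max False by blast
    then have "z \<in> M'" using sM' \<open>M \<subseteq> M'\<close> Ms unfolding F_def by auto
    then obtain m b where zm: "z = m + scale b x" "m \<in> M" unfolding M'_def by blast
    have b0: "b \<noteq> 0" using zm Ms by auto
    have "x - scale (inverse b) z = - scale (inverse b) m"
      using b0 by (simp add: zm sadd)
    then show ?thesis using subneg[OF Ms(1) subsc[OF Ms(1) zm(2)]] by metis
  qed
  then show ?thesis using Ms by blast
qed


lemma dep2: "\<exists>c1 c2. (c1 \<noteq> 0 \<or> c2 \<noteq> 0) \<and> scale c1 (scale r1 v) + scale c2 (scale r2 v) = 0"
proof (cases "r1 = 0")
  case True then show ?thesis by (rule_tac x=1 in exI, rule_tac x=0 in exI) simp
next
  case False
  have "scale (- (r2 * inverse r1)) (scale r1 v) + scale 1 (scale r2 v) = 0"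
    using False by (simp add: sminl mult.assoc)
  then show ?thesis by (metis one_neq_zero)
qed

lemma dep3_core:
  assumes x1: "x1 = scale p1 u + scale q1 v" and x2: "x2 = scale p2 u + scale q2 v"
    and x3: "x3 = scale p3 u + scale q3 v" and p1: "p1 \<noteq> 0"
  shows "\<exists>c1 c2 c3. (c1 \<noteq> 0 \<or> c2 \<noteq> 0 \<or> c3 \<noteq> 0) \<and> scale c1 x1 + scale c2 x2 + scale c3 x3 = 0"
proof -
  define k2 where "k2 = p2 * inverse p1"
  define k3 where "k3 = p3 * inverse p1"
  have y2: "x2 - scale k2 x1 = scale (q2 - k2 * q1) v"
    using p1 by (simp add: x1 x2 k2_def salg mult.assoc)
  have y3: "x3 - scale k3 x1 = scale (q3 - k3 * q1) v"
    using p1 by (simp add: x1 x3 k3_def salg mult.assoc)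
  obtain d2 d3 where d: "d2 \<noteq> 0 \<or> d3 \<noteq> 0"
    "scale d2 (scale (q2 - k2 * q1) v) + scale d3 (scale (q3 - k3 * q1) v) = 0"
    using dep2 by blast
  have "scale (- (d2 * k2 + d3 * k3)) x1 + scale d2 x2 + scale d3 x3
      = scale d2 (x2 - scale k2 x1) + scale d3 (x3 - scale k3 x1)"
  proof -
    have e1: "scale (- (d2*k2 + d3*k3)) x1 = - scale (d2*k2) x1 - scale (d3*k3) x1"
      by (simp only: sminl saddl) (simp add: algebra_simps)
    have e2: "scale d2 (x2 - scale k2 x1) = scale d2 x2 - scale (d2*k2) x1" by (simp only: sdiff sassoc)
    have e3: "scale d3 (x3 - scale k3 x1) = scale d3 x3 - scale (d3*k3) x1" by (simp only: sdiff sassoc)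
    show ?thesis unfolding e1 e2 e3 by (simp add: algebra_simps)
  qed
  also have "\<dots> = 0" unfolding y2 y3 by (rule d(2))
  finally have "scale (- (d2 * k2 + d3 * k3)) x1 + scale d2 x2 + scale d3 x3 = 0" .
  then show ?thesis using d(1) by (intro exI[of _ "- (d2 * k2 + d3 * k3)"] exI[of _ d2] exI[of _ d3]) blast
qed

lemma dep3:
  assumes x1: "x1 = scale p1 u + scale q1 v" and x2: "x2 = scale p2 u + scale q2 v"
    and x3: "x3 = scale p3 u + scale q3 v"
  shows "\<exists>c1 c2 c3. (c1 \<noteq> 0 \<or> c2 \<noteq> 0 \<or> c3 \<noteq> 0) \<and> scale c1 x1 + scale c2 x2 + scale c3 x3 = 0"
proof -
  consider "p1 \<noteq> 0" | "p1 = 0" "p2 \<noteq> 0" | "p1 = 0" "p2 = 0" by blast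
  then show ?thesis
  proof cases
    case 1 from dep3_core[OF x1 x2 x3 1] show ?thesis .
  next
    case 2
    obtain c2 c1 c3 where cc: "(c2 \<noteq> 0 \<or> c1 \<noteq> 0 \<or> c3 \<noteq> 0)" "scale c2 x2 + scale c1 x1 + scale c3 x3 = 0"
      using dep3_core[OF x2 x1 x3 2(2)] by blast
    have "scale c1 x1 + scale c2 x2 + scale c3 x3 = 0" using cc(2) by (simp add: algebra_simps)
    then show ?thesis using cc(1) by (intro exI[of _ c1] exI[of _ c2] exI[of _ c3]) auto
  next
    case 3
    obtain c1 c2 where cc: "c1 \<noteq> 0 \<or> c2 \<noteq> 0" "scale c1 (scale q1 v) + scale c2 (scale q2 v) = 0"
      using dep2 by blast
    have "x1 = scale q1 v" "x2 = scale q2 v" using 3 x1 x2 by simp_all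
    then have "scale c1 x1 + scale c2 x2 + scale 0 x3 = 0" using cc(2) by (simp only: szl add_0_right)
    then show ?thesis using cc(1) by (intro exI[of _ c1] exI[of _ c2] exI[of _ 0]) auto
  qed
qed

lemma span1_sub: assumes "subspace scale X" shows "span1 scale v \<subseteq> X \<longleftrightarrow> v \<in> X"
proof
  assume "span1 scale v \<subseteq> X"
  moreover have "v \<in> span1 scale v" unfolding span1_def by (metis rangeI sone)
  ultimately show "v \<in> X" by blast
qed (auto simp: span1_def intro: subsc[OF assms])

lemma meets_iff: assumes "subspace scale X" "subspace scale Y" shows "   meets scale X Y \<longleftrightarrow> (\<exists>v. v \<noteq> 0 \<and> v \<in> X \<and> v \<in> Y)"
proof
  assume "meets scale X Y"
  then obtain v where "v \<noteq> 0" "span1 scale v \<subseteq> X" "span1 scale v \<subseteq> Y"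
    unfolding meets_def is_point_def by blast
  then show "\<exists>v. v \<noteq> 0 \<and> v \<in> X \<and> v \<in> Y" using span1_sub[OF assms(1), of v] span1_sub[OF assms(2), of v] by blast
next
  assume "\<exists>v. v \<noteq> 0 \<and> v \<in> X \<and> v \<in> Y"
  then obtain v where "v \<noteq> 0" "v \<in> X" "v \<in> Y" by blast
  then show "meets scale X Y" unfolding meets_def is_point_def using span1_sub[OF assms(1), of v] span1_sub[OF assms(2), of v] by blast
qed

lemma ssum_iff: "x \<in> ssum X Y \<longleftrightarrow> (\<exists>a\<in>X. \<exists>b\<in>Y. x = a + b)"
  unfolding ssum_def by blast

lemma inter0: assumes "subspace scale X" "subspace scale Y" shows "   X \<inter> Y = {0} \<longleftrightarrow> \<not>(\<exists>v. v \<noteq> 0 \<and> v \<in> X \<and> v \<in> Y)"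
proof
  assume "X \<inter> Y = {0}" then show "\<not>(\<exists>v. v \<noteq> 0 \<and> v \<in> X \<and> v \<in> Y)" by blast
next
  assume "\<not>(\<exists>v. v \<noteq> 0 \<and> v \<in> X \<and> v \<in> Y)"
  moreover have "0 \<in> X" "0 \<in> Y" using sub0 assms by auto
  ultimately show "X \<inter> Y = {0}" by blast
qed

lemma distant_iff: assumes "subspace scale X" "subspace scale Y" shows "   distant X Y \<longleftrightarrow> (\<forall>x. \<exists>a\<in>X. \<exists>b\<in>Y. x = a + b) \<and> \<not>(\<exists>v. v \<noteq> 0 \<and> v \<in> X \<and> v \<in> Y)"
proof -
  have "ssum X Y = UNIV \<longleftrightarrow> (\<forall>x. \<exists>a\<in>X. \<exists>b\<in>Y. x = a + b)" using ssum_iff[of _ X Y] by blast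
  then show ?thesis unfolding distant_def using inter0[OF assms] by simp
qed

lemma ext_sub:
  assumes "subspace scale H"
  shows "subspace scale {h + scale b d | h b. h \<in> H}"
  unfolding subspace_def
proof (intro conjI ballI allI)
  show "0 \<in> {h + scale b d |h b. h \<in> H}" using sub0[OF assms] by (force intro: exI[of _ 0])
next
  fix p q assume "p \<in> {h + scale b d |h b. h \<in> H}" "q \<in> {h + scale b d |h b. h \<in> H}"
  then obtain m1 b1 m2 b2 where "p = m1 + scale b1 d" "q = m2 + scale b2 d" "m1 \<in> H" "m2 \<in> H" by blast
  moreover have "p + q = (m1+m2) + scale (b1+b2) d" using calculation by (simp add: saddl algebra_simps)
  ultimately show "p + q \<in> {h + scale b d |h b. h \<in> H}" using subadd[OF assms] by blast
next
  fix a p assume "p \<in> {h + scale b d |h b. h \<in> H}"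
  then obtain m1 b1 where "p = m1 + scale b1 d" "m1 \<in> H" by blast
  moreover have "scale a p = scale a m1 + scale (a*b1) d" using calculation by (simp add: sadd)
  ultimately show "scale a p \<in> {h + scale b d |h b. h \<in> H}" using subsc[OF assms] by blast
qed

lemma line_sub: "subspace scale {scale a u + scale b v | a b. True}"
  unfolding subspace_def
proof (intro conjI ballI allI)
  show "0 \<in> {scale a u + scale b v | a b. True}" by (force intro: exI[of _ 0])
next
  fix p q assume "p \<in> {scale a u + scale b v | a b. True}" "q \<in> {scale a u + scale b v | a b. True}"
  then obtain a1 b1 a2 b2 where "p = scale a1 u + scale b1 v" "q = scale a2 u + scale b2 v" by blast
  moreover have "p + q = scale (a1+a2) u + scale (b1+b2) v" using calculation by (simp add: saddl algebra_simps)
  ultimately show "p + q \<in> {scale a u + scale b v | a b. True}" by blast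
next
  fix c p assume "p \<in> {scale a u + scale b v | a b. True}"
  then obtain a1 b1 where "p = scale a1 u + scale b1 v" by blast
  moreover have "scale c p = scale (c*a1) u + scale (c*b1) v" using calculation by (simp add: sadd)
  ultimately show "scale c p \<in> {scale a u + scale b v | a b. True}" by blast
qed


lemma L1:
  assumes sW: "subspace scale W" and s0: "subspace scale E0" and s1: "subspace scale E1"
    and adj: "adjacent scale W E0" and d01: "distant E0 E1"
    and no: "\<not>(\<exists>x. x \<noteq> 0 \<and> x \<in> W \<and> x \<in> E1)"
  shows "distant W E1"
proof -
  have d01': "\<forall>x. \<exists>a\<in>E0. \<exists>b\<in>E1. x = a + b" "\<not>(\<exists>v. v \<noteq> 0 \<and> v \<in> E0 \<and> v \<in> E1)"
    using d01 distant_iff[OF s0 s1] by auto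
  obtain v0 where v0: "v0 \<notin> W" "ssum W E0 = ssum W (span1 scale v0)"
    using adj unfolding adjacent_def quot_dim1_def by blast
  obtain c where c: "c \<notin> E0" "ssum E0 W = ssum E0 (span1 scale c)"
    using adj unfolding adjacent_def quot_dim1_def by blast
  have "c \<in> ssum E0 (span1 scale c)" unfolding ssum_iff span1_def using sub0[OF s0]
    by (metis add_0 rangeI sone)
  then obtain e w where ew: "e \<in> E0" "w \<in> W" "c = e + w" using c(2) ssum_iff by metis
  have wE0: "w \<notin> E0" using ew c(1) subadd[OF s0] by blast
  obtain w0 w1 where w01: "w0 \<in> E0" "w1 \<in> E1" "w = w0 + w1" using d01' by blast
  have w0W: "w0 \<notin> W"
  proof
    assume "w0 \<in> W"
    then have "w1 \<in> W" using subdiff[OF sW ew(2)] w01 by (metis add_diff_cancel_left')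
    moreover have "w1 \<noteq> 0" using wE0 w01 by auto
    ultimately show False using no w01 by blast
  qed
  have "w0 \<in> ssum W E0" unfolding ssum_iff using w01 sub0[OF sW] by force
  then have "w0 \<in> ssum W (span1 scale v0)" using v0(2) by simp
  then obtain w' r where wr: "w' \<in> W" "w0 = w' + scale r v0" unfolding ssum_iff span1_def by blast
  have r0: "r \<noteq> 0" using wr w0W by auto
  have v0eq: "v0 = scale (inverse r) (w0 - w')" using wr r0 by simp
  have all: "x \<in> ssum W E1" for x
  proof -
    obtain x0 x1 where x01: "x0 \<in> E0" "x1 \<in> E1" "x = x0 + x1" using d01' by blast
    have "x0 \<in> ssum W E0" unfolding ssum_iff using x01 sub0[OF sW] by force
    then have "x0 \<in> ssum W (span1 scale v0)" using v0(2) by simp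
    then obtain w'' g where wg: "w'' \<in> W" "x0 = w'' + scale g v0" unfolding ssum_iff span1_def by blast
    define k where "k = g * inverse r"
    have "x = (w'' + scale k w - scale k w') + (x1 - scale k w1)"
      using x01(3) wg(2) v0eq w01(3) by (simp add: k_def salg algebra_simps)
    moreover have "w'' + scale k w - scale k w' \<in> W"
      using wg(1) ew(2) wr(1) by (intro subdiff[OF sW] subadd[OF sW] subsc[OF sW])
    moreover have "x1 - scale k w1 \<in> E1" using x01 w01 by (intro subdiff[OF s1] subsc[OF s1])
    ultimately show ?thesis unfolding ssum_iff by blast
  qed
  then show ?thesis using distant_iff[OF sW s1] no unfolding ssum_iff by blast
qed

lemma transport:
  assumes sX: "subspace scale X" and iX: "iso_quot scale X"
    and Fadd: "\<And>x y. F (x + y) = F x + F y" and Fsc: "\<And>a x. F (scale a x) = scale a (F x)"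
    and GF: "\<And>x. G (F x) = x" and FG: "\<And>y. F (G y) = y"
  shows "iso_quot scale (F ` X)"
proof -
  obtain g where g: "bij_betw g X (cosets X)" "\<forall>x\<in>X. \<forall>y\<in>X. g (x + y) = qadd (g x) (g y)"
    "\<forall>a. \<forall>x\<in>X. g (scale a x) = qscale scale X a (g x)"
    using iX unfolding iso_quot_def by blast
  have injF: "inj F" by (metis GF injI)
  have imc: "F ` ((\<lambda>x. v + x) ` X) = (\<lambda>x. F v + x) ` (F ` X)" for v
    by (auto simp: image_image Fadd)
  have cos: "(image F) ` cosets X = cosets (F ` X)"
  proof
    show "image F ` cosets X \<subseteq> cosets (F ` X)"
    proof
      fix D assume "D \<in> image F ` cosets X"
      then obtain v where "D = F ` ((\<lambda>x. v + x) ` X)" unfolding cosets_def by blast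
      then have "D = (\<lambda>x. F v + x) ` (F ` X)" using imc by simp
      then show "D \<in> cosets (F ` X)" unfolding cosets_def by blast
    qed
    show "cosets (F ` X) \<subseteq> image F ` cosets X"
    proof
      fix C assume "C \<in> cosets (F ` X)"
      then obtain v where "C = (\<lambda>x. v + x) ` (F ` X)" unfolding cosets_def by blast
      then have "C = F ` ((\<lambda>x. G v + x) ` X)" using imc[of "G v"] FG by simp
      then show "C \<in> image F ` cosets X" unfolding cosets_def by blast
    qed
  qed
  have b1: "bij_betw G (F ` X) X"
    by (rule bij_betw_byWitness[where f'=F]) (auto simp: GF FG)
  have b3: "bij_betw (image F) (cosets X) (cosets (F ` X))"
    unfolding bij_betw_def using cos inj_image_eq_iff[OF injF] by (auto intro: inj_onI)
  define g' where "g' = (\<lambda>y. F ` g (G y))"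
  have bij: "bij_betw g' (F ` X) (cosets (F ` X))"
    unfolding g'_def using bij_betw_trans[OF bij_betw_trans[OF b1 g(1)] b3] by (simp add: comp_def)
  have Gadd: "G (x + y) = G x + G y" for x y by (metis FG Fadd GF)
  have Gsc: "G (scale a x) = scale a (G x)" for a x by (metis FG Fsc GF)
  have qa: "F ` qadd C D = qadd (F ` C) (F ` D)" for C D
    unfolding qadd_def
  proof (intro equalityI subsetI)
    fix y assume "y \<in> F ` {c + d |c d. c \<in> C \<and> d \<in> D}"
    then obtain c d where "c \<in> C" "d \<in> D" "y = F (c + d)" by blast
    then show "y \<in> {c + d |c d. c \<in> F ` C \<and> d \<in> F ` D}" unfolding Fadd by blast
  next
    fix y assume "y \<in> {c + d |c d. c \<in> F ` C \<and> d \<in> F ` D}"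
    then obtain c d where "c \<in> C" "d \<in> D" "y = F c + F d" by blast
    then have "y = F (c + d)" by (simp only: Fadd)
    then show "y \<in> F ` {c + d |c d. c \<in> C \<and> d \<in> D}" using \<open>c \<in> C\<close> \<open>d \<in> D\<close> by blast
  qed
  have qs: "F ` qscale scale X a C = qscale scale (F ` X) a (F ` C)" for a C
    unfolding qscale_def
  proof (intro equalityI subsetI)
    fix y assume "y \<in> F ` {scale a c + x |c x. c \<in> C \<and> x \<in> X}"
    then obtain c d where "c \<in> C" "d \<in> X" "y = F (scale a c + d)" by blast
    then show "y \<in> {scale a c + x |c x. c \<in> F ` C \<and> x \<in> F ` X}" unfolding Fadd Fsc by blast
  next
    fix y assume "y \<in> {scale a c + x |c x. c \<in> F ` C \<and> x \<in> F ` X}"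
    then obtain c d where "c \<in> C" "d \<in> X" "y = scale a (F c) + F d" by blast
    then have "y = F (scale a c + d)" by (simp only: Fadd Fsc)
    then show "y \<in> F ` {scale a c + x |c x. c \<in> C \<and> x \<in> X}" using \<open>c \<in> C\<close> \<open>d \<in> X\<close> by blast
  qed
  have "\<forall>x\<in>F ` X. \<forall>y\<in>F ` X. g' (x + y) = qadd (g' x) (g' y)"
    unfolding g'_def using g(2) by (auto simp: Gadd GF qa)
  moreover have "\<forall>a. \<forall>x\<in>F ` X. g' (scale a x) = qscale scale (F ` X) a (g' x)"
    unfolding g'_def using g(3) by (auto simp: Gsc GF qs)
  ultimately show ?thesis unfolding iso_quot_def using bij by blast
qed


lemma span1_subspace: "subspace scale (span1 scale v)"
  unfolding subspace_def span1_def
proof (intro conjI ballI allI)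
  show "0 \<in> range (\<lambda>a. scale a v)" by (metis rangeI szl)
next
  fix x y assume "x \<in> range (\<lambda>a. scale a v)" "y \<in> range (\<lambda>a. scale a v)"
  then obtain a b where "x = scale a v" "y = scale b v" by blast
  then have "x + y = scale (a + b) v" by (simp add: saddl)
  then show "x + y \<in> range (\<lambda>a. scale a v)" by blast
next
  fix c x assume "x \<in> range (\<lambda>a. scale a v)"
  then obtain a where "x = scale a v" by blast
  then have "scale c x = scale (c * a) v" by simp
  then show "scale c x \<in> range (\<lambda>a. scale a v)" by blast
qed

lemma sub_int: "subspace scale X \<Longrightarrow> subspace scale Y \<Longrightarrow> subspace scale (X \<inter> Y)"
  unfolding subspace_def by blast

lemma A0:
  assumes dim: "dim_gt_2 scale" and sW: "subspace scale W" and s0: "subspace scale E0"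
    and adj: "adjacent scale W E0"
  shows "\<not> distant W E0"
proof
  assume dist: "distant W E0"
  obtain v where v: "v \<notin> W" "ssum W E0 = ssum W (span1 scale v)"
    using adj unfolding adjacent_def quot_dim1_def by blast
  obtain c where c: "c \<notin> E0" "ssum E0 W = ssum E0 (span1 scale c)"
    using adj unfolding adjacent_def quot_dim1_def by blast
  have dd: "\<forall>x. \<exists>a\<in>W. \<exists>b\<in>E0. x = a + b" "\<not>(\<exists>v. v \<noteq> 0 \<and> v \<in> W \<and> v \<in> E0)"
    using dist distant_iff[OF sW s0] by auto
  obtain w0 where w0: "\<forall>w\<in>W. \<exists>\<beta>. w = scale \<beta> w0"
  proof (cases "\<exists>w. w \<noteq> 0 \<and> w \<in> W")
    case False
    then have "\<forall>w\<in>W. \<exists>\<beta>. w = scale \<beta> 0" by auto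
    then show thesis by (rule that)
  next
    case True
    then obtain w1 where w1: "w1 \<noteq> 0" "w1 \<in> W" by blast
    have "w1 \<in> ssum E0 W" unfolding ssum_iff using w1 sub0[OF s0] by force
    then have "w1 \<in> ssum E0 (span1 scale c)" using c(2) by simp
    then obtain e0 b0 where eb: "e0 \<in> E0" "w1 = e0 + scale b0 c" unfolding ssum_iff span1_def by blast
    have b0: "b0 \<noteq> 0" using eb w1 dd(2) by auto
    have "\<forall>w\<in>W. \<exists>\<beta>. w = scale \<beta> w1"
    proof
      fix w assume w: "w \<in> W"
      have "w \<in> ssum E0 W" unfolding ssum_iff using w sub0[OF s0] by force
      then have "w \<in> ssum E0 (span1 scale c)" using c(2) by simp
      then obtain e b where ebw: "e \<in> E0" "w = e + scale b c" unfolding ssum_iff span1_def by blast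
      define k where "k = b * inverse b0"
      have "w - scale k w1 = e - scale k e0"
        using b0 by (simp add: ebw eb k_def salg algebra_simps mult.assoc)
      moreover have "w - scale k w1 \<in> W" using w w1 by (intro subdiff[OF sW] subsc[OF sW])
      moreover have "e - scale k e0 \<in> E0" using ebw eb by (intro subdiff[OF s0] subsc[OF s0])
      ultimately have "w - scale k w1 = 0" using dd(2) by metis
      then show "\<exists>\<beta>. w = scale \<beta> w1" by (metis eq_iff_diff_eq_0)
    qed
    then show thesis by (rule that)
  qed
  have all: "\<exists>p q. x = scale p w0 + scale q v" for x
  proof -
    have "x \<in> ssum W E0" unfolding ssum_iff using dd(1) by blast
    then have "x \<in> ssum W (span1 scale v)" using v(2) by simp
    then obtain w q where "w \<in> W" "x = w + scale q v" unfolding ssum_iff span1_def by blast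
    moreover obtain p where "w = scale p w0" using w0 calculation(1) by blast
    ultimately show ?thesis by blast
  qed
  obtain u1 u2 u3 where ind: "\<forall>a b c. scale a u1 + scale b u2 + scale c u3 = 0 \<longrightarrow> a = 0 \<and> b = 0 \<and> c = 0"
    using dim unfolding dim_gt_2_def by blast
  obtain p1 q1 p2 q2 p3 q3 where "u1 = scale p1 w0 + scale q1 v" "u2 = scale p2 w0 + scale q2 v"
     "u3 = scale p3 w0 + scale q3 v" using all by metis
  from dep3[OF this] ind show False by blast
qed


lemma Gr_sub: "X \<in> Gr scale \<Longrightarrow> subspace scale X"
  unfolding Gr_def by blast

lemma R2_D2:
  assumes dim: "dim_gt_2 scale" and SG: "S \<subseteq> Gr scale" and r1: "R1 S" and r2: "R2 scale S"
  shows "D2 scale S"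
  unfolding D2_def
proof (intro ballI impI)
  fix E0 E1 E2 W E
  assume E0: "E0 \<in> S" and E1: "E1 \<in> S" and E2: "E2 \<in> S" and ne: "E0 \<noteq> E1 \<and> E0 \<noteq> E2 \<and> E1 \<noteq> E2"
    and WG: "W \<in> Gr scale" and h: "adjacent scale W E0 \<and> \<not> distant W E1 \<and> \<not> distant W E2"
    and E: "E \<in> S"
  have s0: "subspace scale E0" and s1: "subspace scale E1" and s2: "subspace scale E2"
    and sE: "subspace scale E" and sW: "subspace scale W"
    using E0 E1 E2 E WG SG Gr_sub by auto
  have dist: "\<And>X Y. X \<in> S \<Longrightarrow> Y \<in> S \<Longrightarrow> X \<noteq> Y \<Longrightarrow> distant X Y"
    using r1 unfolding R1_def by blast
  have n01: "\<not>(\<exists>v. v \<noteq> 0 \<and> v \<in> E0 \<and> v \<in> E1)"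
    using dist[OF E0 E1] ne distant_iff[OF s0 s1] by auto
  have n12: "\<not>(\<exists>v. v \<noteq> 0 \<and> v \<in> E1 \<and> v \<in> E2)"
    using dist[OF E1 E2] ne distant_iff[OF s1 s2] by auto
  have adj: "adjacent scale W E0" using h by blast
  show "\<not> distant W E"
  proof (cases "E = E1 \<or> E = E2")
    case True then show ?thesis using h by blast
  next
    case False
    show ?thesis
    proof (cases "E = E0")
      case True then show ?thesis using A0[OF dim sW s0 adj] by simp
    next
      case False
      obtain b where b: "b \<noteq> 0" "b \<in> W" "b \<in> E1"
        using L1[OF sW s0 s1 adj dist[OF E0 E1]] h ne by blast
      obtain c where c: "c \<noteq> 0" "c \<in> W" "c \<in> E2"
        using L1[OF sW s0 s2 adj dist[OF E0 E2]] h ne by blast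
      obtain c' where c': "c' \<notin> E0" "ssum E0 W = ssum E0 (span1 scale c')"
        using adj unfolding adjacent_def quot_dim1_def by blast
      have "b \<in> ssum E0 W" unfolding ssum_iff using b sub0[OF s0] by force
      then have "b \<in> ssum E0 (span1 scale c')" using c' by simp
      then obtain e \<beta> where eb: "e \<in> E0" "b = e + scale \<beta> c'" unfolding ssum_iff span1_def by blast
      have \<beta>: "\<beta> \<noteq> 0" using eb b n01 by auto
      have "c \<in> ssum E0 W" unfolding ssum_iff using c sub0[OF s0] by force
      then have "c \<in> ssum E0 (span1 scale c')" using c' by simp
      then obtain e' \<gamma> where ec: "e' \<in> E0" "c = e' + scale \<gamma> c'" unfolding ssum_iff span1_def by blast
      define k where "k = \<gamma> * inverse \<beta>"
      define hh where "hh = c - scale k b"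
      have hh_eq: "hh = e' - scale k e"
        using \<beta> by (simp add: hh_def ec eb k_def salg algebra_simps mult.assoc)
      have hE0: "hh \<in> E0" unfolding hh_eq using ec eb by (intro subdiff[OF s0] subsc[OF s0])
      have hW: "hh \<in> W" unfolding hh_def using b c by (intro subdiff[OF sW] subsc[OF sW])
      have h0: "hh \<noteq> 0"
      proof
        assume "hh = 0"
        then have "c = scale k b" unfolding hh_def by simp
        then have "c \<in> E1" using subsc[OF s1 b(3)] by simp
        then show False using c n12 by blast
      qed
      define L where "L = {scale a hh + scale bb b | a bb. True}"
      have sL: "subspace scale L" unfolding L_def by (rule line_sub)
      have ind: "\<forall>a bb. scale a hh + scale bb b = 0 \<longrightarrow> a = 0 \<and> bb = 0"
      proof (intro allI impI)
        fix a bb assume "scale a hh + scale bb b = 0"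
        then have eq: "scale a hh = scale (- bb) b" by (simp add: sminl eq_neg_iff_add_eq_0)
        have "scale a hh \<in> E0" using hE0 by (rule subsc[OF s0])
        moreover have "scale a hh \<in> E1" unfolding eq using b by (intro subsc[OF s1])
        ultimately have "scale a hh = 0" using n01 by blast
        then have "a = 0" using h0 by simp
        then show "a = 0 \<and> bb = 0" using eq b by simp
      qed
      have line: "is_line scale L" unfolding is_line_def L_def using ind by blast
      have inL: "scale a hh + scale bb b \<in> L" for a bb unfolding L_def by blast
      have hL: "hh \<in> L" using inL[of 1 0] by simp
      have bL: "b \<in> L" using inL[of 0 1] by simp
      have cL: "c \<in> L" using inL[of 1 k] unfolding hh_def by simp
      have m0: "meets scale L E0" using meets_iff[OF sL s0] hL hE0 h0 by blast
      have m1: "meets scale L E1" using meets_iff[OF sL s1] bL b by blast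
      have m2: "meets scale L E2" using meets_iff[OF sL s2] cL c by blast
      have "meets scale L E" using r2 line E0 E1 E2 ne m0 m1 m2 E unfolding R2_def by blast
      then obtain y where y: "y \<noteq> 0" "y \<in> L" "y \<in> E" using meets_iff[OF sL sE] by blast
      have "L \<subseteq> W" unfolding L_def using hW b(2) by (auto intro!: subadd[OF sW] subsc[OF sW])
      then show ?thesis using y distant_iff[OF sW sE] by blast
    qed
  qed
qed


lemma D2_R2:
  assumes SG: "S \<subseteq> Gr scale" and r1: "R1 S" and d2: "D2 scale S"
  shows "R2 scale S"
  unfolding R2_def
proof (intro allI impI ballI)
  fix L assume line: "is_line scale L"
  fix E0 E1 E2 assume E0: "E0 \<in> S" and E1: "E1 \<in> S" and E2: "E2 \<in> S"
    and cnd: "E0 \<noteq> E1 \<and> E0 \<noteq> E2 \<and> E1 \<noteq> E2 \<and> meets scale L E0 \<and> meets scale L E1 \<and> meets scale L E2"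
  fix E assume E: "E \<in> S"
  obtain u v where uv: "L = {scale a u + scale b v | a b. True}"
    using line unfolding is_line_def by blast
  have sL: "subspace scale L" unfolding uv by (rule line_sub)
  have s0: "subspace scale E0" and s1: "subspace scale E1" and s2: "subspace scale E2"
    and sE: "subspace scale E"
    using E0 E1 E2 E SG Gr_sub by auto
  have dist: "\<And>X Y. X \<in> S \<Longrightarrow> Y \<in> S \<Longrightarrow> X \<noteq> Y \<Longrightarrow> distant X Y"
    using r1 unfolding R1_def by blast
  have n01: "\<not>(\<exists>v. v \<noteq> 0 \<and> v \<in> E0 \<and> v \<in> E1)"
    using dist[OF E0 E1] cnd distant_iff[OF s0 s1] by auto
  show "meets scale L E"
  proof (cases "E = E0 \<or> E = E1 \<or> E = E2")
    case True then show ?thesis using cnd by blast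
  next
    case False
    then have nE: "E \<noteq> E0" "E \<noteq> E1" "E \<noteq> E2" by auto
    show ?thesis
    proof (rule ccontr)
      assume nm: "\<not> meets scale L E"
      then have noLE: "\<And>y. y \<in> L \<Longrightarrow> y \<in> E \<Longrightarrow> y = 0" using meets_iff[OF sL sE] by blast
      obtain a0 where a0: "a0 \<noteq> 0" "a0 \<in> L" "a0 \<in> E0" using cnd meets_iff[OF sL s0] by blast
      obtain a1 where a1: "a1 \<noteq> 0" "a1 \<in> L" "a1 \<in> E1" using cnd meets_iff[OF sL s1] by blast
      obtain a2 where a2: "a2 \<noteq> 0" "a2 \<in> L" "a2 \<in> E2" using cnd meets_iff[OF sL s2] by blast
      have d0E: "distant E0 E" using dist[OF E0 E] nE by auto
      have d0E': "\<forall>x. \<exists>a\<in>E0. \<exists>b\<in>E. x = a + b" "\<not>(\<exists>v. v \<noteq> 0 \<and> v \<in> E0 \<and> v \<in> E)"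
        using d0E distant_iff[OF s0 sE] by auto
      obtain z e where ze: "z \<in> E0" "e \<in> E" "a1 = z + e" using d0E'(1) by blast
      have a1E0: "a1 \<notin> E0" using a1 n01 by blast
      have zA: "z \<notin> span1 scale a0"
      proof
        assume "z \<in> span1 scale a0"
        then obtain l where l: "z = scale l a0" unfolding span1_def by blast
        have "e = a1 - scale l a0" using ze l by (simp add: algebra_simps)
        then have "e \<in> L" using a0 a1 by (simp add: subdiff[OF sL] subsc[OF sL])
        then have "e = 0" using noLE ze by blast
        then have "a1 = z" using ze by simp
        then show False using a1E0 ze by simp
      qed
      obtain P where P: "subspace scale P" "span1 scale a0 \<subseteq> P" "z \<notin> P"
        "\<forall>x. \<exists>\<alpha>. x - scale \<alpha> z \<in> P"
        using zorn_hyp[OF span1_subspace zA] by blast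
      define H where "H = P \<inter> E0"
      have sH: "subspace scale H" unfolding H_def using P(1) s0 by (rule sub_int)
      have a0H: "a0 \<in> H" unfolding H_def using P(2) a0(3) span1_sub[OF P(1)] by blast
      have zH: "z \<notin> H" unfolding H_def using P(3) by blast
      have HE0: "H \<subseteq> E0" unfolding H_def by blast
      have E0dec: "\<exists>\<gamma>. x - scale \<gamma> z \<in> H" if "x \<in> E0" for x
      proof -
        obtain \<gamma> where "x - scale \<gamma> z \<in> P" using P(4) by blast
        moreover have "x - scale \<gamma> z \<in> E0" using that ze(1) by (intro subdiff[OF s0] subsc[OF s0])
        ultimately show ?thesis unfolding H_def by blast
      qed
      define W where "W = {hh + scale \<beta> a1 | hh \<beta>. hh \<in> H}"
      have sW: "subspace scale W" unfolding W_def using sH by (rule ext_sub)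
      have inW: "hh + scale \<beta> a1 \<in> W" if "hh \<in> H" for hh \<beta> unfolding W_def using that by blast
      have a1W: "a1 \<in> W" using inW[of 0 1] sub0[OF sH] by simp
      have HW: "H \<subseteq> W" using inW[of _ 0] by auto
      have sc_a1: "scale \<beta> a1 \<in> E0 \<Longrightarrow> \<beta> = 0" for \<beta>
        using n01 subsc[OF s1 a1(3), of \<beta>] a1(1) by auto
      
      have a2W: "a2 \<in> W"
      proof -
        obtain p0 q0 where "a0 = scale p0 u + scale q0 v" using a0(2) uv by blast
        moreover obtain p1 q1 where "a1 = scale p1 u + scale q1 v" using a1(2) uv by blast
        moreover obtain p2 q2 where "a2 = scale p2 u + scale q2 v" using a2(2) uv by blast
        ultimately obtain c0 c1 c2 where cc: "c0 \<noteq> 0 \<or> c1 \<noteq> 0 \<or> c2 \<noteq> 0"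
          "scale c0 a0 + scale c1 a1 + scale c2 a2 = 0" using dep3 by metis
        have c2: "c2 \<noteq> 0"
        proof
          assume "c2 = 0"
          then have eq: "scale c0 a0 = scale (- c1) a1" using cc(2) by (simp add: sminl eq_neg_iff_add_eq_0)
          have "scale c0 a0 \<in> E0" using a0 by (intro subsc[OF s0])
          then have "c1 = 0" using sc_a1[of "-c1"] eq by simp
          then have "c0 = 0" using eq a0 by simp
          then show False using cc(1) \<open>c1 = 0\<close> \<open>c2 = 0\<close> by simp
        qed
        have "- (scale c0 a0 + scale c1 a1) = scale c2 a2" using cc(2) by (simp only: neg_eq_iff_add_eq_0)
        then have "scale c2 a2 = - (scale c0 a0 + scale c1 a1)" by (rule sym)
        then have "a2 = scale (inverse c2) (- (scale c0 a0 + scale c1 a1))" using c2 by (metis sinv)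
        then have "a2 = scale (- (inverse c2 * c0)) a0 + scale (- (inverse c2 * c1)) a1"
          by (simp add: salg)
        moreover have "scale (- (inverse c2 * c0)) a0 \<in> H" using a0H by (rule subsc[OF sH])
        ultimately show ?thesis using inW by simp
      qed
      have zW: "z \<notin> W"
      proof
        assume "z \<in> W"
        then obtain hh \<beta> where hb: "hh \<in> H" "z = hh + scale \<beta> a1" unfolding W_def by blast
        have "scale \<beta> a1 = z - hh" using hb by simp
        moreover have "z - hh \<in> E0" using ze(1) hb(1) HE0 by (intro subdiff[OF s0]) auto
        ultimately have "\<beta> = 0" using sc_a1 by simp
        then show False using hb zH by simp
      qed
      have adj: "adjacent scale W E0"
        unfolding adjacent_def quot_dim1_def
      proof (intro conjI)
        show "\<exists>v. v \<notin> W \<and> ssum W E0 = ssum W (span1 scale v)"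
        proof (intro exI conjI)
          show "z \<notin> W" by (rule zW)
          show "ssum W E0 = ssum W (span1 scale z)"
          proof (intro equalityI subsetI)
            fix x assume "x \<in> ssum W E0"
            then obtain w e0 where we: "w \<in> W" "e0 \<in> E0" "x = w + e0" unfolding ssum_iff by blast
            obtain \<gamma> where g: "e0 - scale \<gamma> z \<in> H" using E0dec[OF we(2)] by blast
            have "x = (w + (e0 - scale \<gamma> z)) + scale \<gamma> z" using we by simp
            moreover have "w + (e0 - scale \<gamma> z) \<in> W" using we(1) g HW by (intro subadd[OF sW]) auto
            ultimately show "x \<in> ssum W (span1 scale z)" unfolding ssum_iff span1_def by blast
          next
            fix x assume "x \<in> ssum W (span1 scale z)"
            then obtain w \<gamma> where we: "w \<in> W" "x = w + scale \<gamma> z" unfolding ssum_iff span1_def by blast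
            moreover have "scale \<gamma> z \<in> E0" using ze(1) by (rule subsc[OF s0])
            ultimately show "x \<in> ssum W E0" unfolding ssum_iff by blast
          qed
        qed
        show "\<exists>v. v \<notin> E0 \<and> ssum E0 W = ssum E0 (span1 scale v)"
        proof (intro exI conjI)
          show "a1 \<notin> E0" by (rule a1E0)
          show "ssum E0 W = ssum E0 (span1 scale a1)"
          proof (intro equalityI subsetI)
            fix x assume "x \<in> ssum E0 W"
            then obtain e0 w where we: "e0 \<in> E0" "w \<in> W" "x = e0 + w" unfolding ssum_iff by blast
            then obtain hh \<beta> where hb: "hh \<in> H" "w = hh + scale \<beta> a1" unfolding W_def by blast
            have "x = (e0 + hh) + scale \<beta> a1" using we hb by (simp add: add.assoc)
            moreover have "e0 + hh \<in> E0" using we(1) hb(1) HE0 by (intro subadd[OF s0]) auto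
            ultimately show "x \<in> ssum E0 (span1 scale a1)" unfolding ssum_iff span1_def by blast
          next
            fix x assume "x \<in> ssum E0 (span1 scale a1)"
            then obtain e0 \<beta> where we: "e0 \<in> E0" "x = e0 + scale \<beta> a1" unfolding ssum_iff span1_def by blast
            moreover have "scale \<beta> a1 \<in> W" using a1W by (rule subsc[OF sW])
            ultimately show "x \<in> ssum E0 W" unfolding ssum_iff by blast
          qed
        qed
      qed
      
      define d where "d = a1 - z"
      define A' where "A' = {hh + scale \<beta> d | hh \<beta>. hh \<in> H}"
      have sA': "subspace scale A'" unfolding A'_def using sH by (rule ext_sub)
      have zA': "z \<notin> A'"
      proof
        assume "z \<in> A'"
        then obtain hh \<beta> where hb: "hh \<in> H" "z = hh + scale \<beta> d" unfolding A'_def by blast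
        have "scale \<beta> a1 = z - hh + scale \<beta> z" using hb by (simp add: d_def sdiff algebra_simps)
        moreover have "z - hh + scale \<beta> z \<in> E0" using ze(1) hb(1) HE0
          by (intro subadd[OF s0] subdiff[OF s0] subsc[OF s0]) auto
        ultimately have "\<beta> = 0" using sc_a1 by simp
        then show False using hb zH by simp
      qed
      obtain P' where P': "subspace scale P'" "A' \<subseteq> P'" "z \<notin> P'" "\<forall>x. \<exists>\<alpha>. x - scale \<alpha> z \<in> P'"
        using zorn_hyp[OF sA' zA'] by blast
      define lam where "lam x = (THE \<alpha>. x - scale \<alpha> z \<in> P')" for x
      have uniq: "\<alpha> = \<alpha>'" if "x - scale \<alpha> z \<in> P'" "x - scale \<alpha>' z \<in> P'" for x \<alpha> \<alpha>'
      proof (rule ccontr)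
        assume ne: "\<alpha> \<noteq> \<alpha>'"
        have "(x - scale \<alpha>' z) - (x - scale \<alpha> z) \<in> P'" using that(2) that(1) by (rule subdiff[OF P'(1)])
        moreover have "(x - scale \<alpha>' z) - (x - scale \<alpha> z) = scale (\<alpha> - \<alpha>') z" by (simp add: sdiffl)
        ultimately have "scale (\<alpha> - \<alpha>') z \<in> P'" by simp
        then have "scale (inverse (\<alpha> - \<alpha>')) (scale (\<alpha> - \<alpha>') z) \<in> P'" by (rule subsc[OF P'(1)])
        moreover have "scale (inverse (\<alpha> - \<alpha>')) (scale (\<alpha> - \<alpha>') z) = z" using ne by (intro sinv) simp
        ultimately have "z \<in> P'" by simp
        then show False using P'(3) by simp
      qed
      have lam_eq: "lam x = \<alpha>" if "x - scale \<alpha> z \<in> P'" for x \<alpha>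
        unfolding lam_def
      proof (rule the_equality)
        show "x - scale \<alpha> z \<in> P'" by (rule that)
        show "\<And>\<alpha>'. x - scale \<alpha>' z \<in> P' \<Longrightarrow> \<alpha>' = \<alpha>" using uniq that by blast
      qed
      have lam_mem: "x - scale (lam x) z \<in> P'" for x
        using P'(4) lam_eq by metis
      have dP: "d \<in> P'" using P'(2) unfolding A'_def using sub0[OF sH] by (force intro: exI[of _ 1])
      have HP: "H \<subseteq> P'" using P'(2) unfolding A'_def by (force intro: exI[of _ 0])
      have lam_add: "lam (x + y) = lam x + lam y" for x y
      proof (rule lam_eq)
        have "(x + y) - scale (lam x + lam y) z = (x - scale (lam x) z) + (y - scale (lam y) z)"
          by (simp add: saddl algebra_simps)
        then show "x + y - scale (lam x + lam y) z \<in> P'" using subadd[OF P'(1) lam_mem[of x] lam_mem[of y]] by (simp only:)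
      qed
      have lam_sc: "lam (scale a x) = a * lam x" for a x
      proof (rule lam_eq)
        have "scale a x - scale (a * lam x) z = scale a (x - scale (lam x) z)" by (simp add: sdiff)
        then show "scale a x - scale (a * lam x) z \<in> P'" using subsc[OF P'(1) lam_mem[of x]] by (simp only:)
      qed
      have lam_d: "lam (x + scale c d) = lam x" for x c
      proof (rule lam_eq)
        have "(x + scale c d) - scale (lam x) z = (x - scale (lam x) z) + scale c d"
          by (simp add: algebra_simps)
        then show "(x + scale c d) - scale (lam x) z \<in> P'"
          using subadd[OF P'(1) lam_mem[of x] subsc[OF P'(1) dP]] by (simp only:)
      qed
      define F where "F x = x + scale (lam x) d" for x
      define G where "G x = x - scale (lam x) d" for x
      have Fadd: "F (x + y) = F x + F y" for x y unfolding F_def lam_add by (simp add: saddl algebra_simps)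
      have Fsc: "F (scale a x) = scale a (F x)" for a x unfolding F_def lam_sc by (simp add: sadd)
      have GF: "G (F x) = x" for x unfolding F_def G_def lam_d by simp
      have FG: "F (G y) = y" for y
      proof -
        have "G y = y + scale (- lam y) d" unfolding G_def by (simp add: sminl)
        then have "lam (G y) = lam y" using lam_d by simp
        then show ?thesis unfolding F_def G_def by simp
      qed
      have FE0: "F ` E0 = W"
      proof (intro equalityI subsetI)
        fix y assume "y \<in> F ` E0"
        then obtain x where x: "x \<in> E0" "y = F x" by blast
        obtain \<gamma> where g: "x - scale \<gamma> z \<in> H" using E0dec[OF x(1)] by blast
        then have "lam x = \<gamma>" using HP by (intro lam_eq) auto
        then have "y = (x - scale \<gamma> z) + scale \<gamma> a1" unfolding x F_def d_def by (simp add: sdiff)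
        then show "y \<in> W" using inW[OF g] by simp
      next
        fix y assume "y \<in> W"
        then obtain hh \<beta> where hb: "hh \<in> H" "y = hh + scale \<beta> a1" unfolding W_def by blast
        define x where "x = hh + scale \<beta> z"
        have xE0: "x \<in> E0" unfolding x_def using hb(1) HE0 ze(1) by (intro subadd[OF s0] subsc[OF s0]) auto
        have "x - scale \<beta> z = hh" unfolding x_def by simp
        then have "lam x = \<beta>" using hb(1) HP by (intro lam_eq) auto
        then have "F x = y" unfolding F_def x_def d_def hb(2) by (simp add: sdiff)
        then show "y \<in> F ` E0" using xE0 by blast
      qed
      have "iso_quot scale E0" using E0 SG unfolding Gr_def by blast
      then have "iso_quot scale (F ` E0)" using transport[OF s0 _ Fadd Fsc GF FG] by blast
      then have WG: "W \<in> Gr scale" unfolding Gr_def using sW FE0 by simp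
      have n1: "\<not> distant W E1" using distant_iff[OF sW s1] a1 a1W by blast
      have n2: "\<not> distant W E2" using distant_iff[OF sW s2] a2 a2W by blast
      have noWE: "\<not>(\<exists>x. x \<noteq> 0 \<and> x \<in> W \<and> x \<in> E)"
      proof
        assume "\<exists>x. x \<noteq> 0 \<and> x \<in> W \<and> x \<in> E"
        then obtain x where x: "x \<noteq> 0" "x \<in> W" "x \<in> E" by blast
        then obtain hh \<beta> where hb: "hh \<in> H" "x = hh + scale \<beta> a1" unfolding W_def by blast
        have eq: "hh + scale \<beta> z = x - scale \<beta> e" using hb ze by (simp add: sadd algebra_simps)
        have "x - scale \<beta> e \<in> E" using x ze by (intro subdiff[OF sE] subsc[OF sE])
        moreover have "hh + scale \<beta> z \<in> E0" using hb(1) HE0 ze(1) by (intro subadd[OF s0] subsc[OF s0]) auto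
        ultimately have z0: "hh + scale \<beta> z = 0" using d0E'(2) eq by metis
        show False
        proof (cases "\<beta> = 0")
          case True then show False using z0 hb x by simp
        next
          case False
          have "scale \<beta> z = - hh" using z0 by (simp add: eq_neg_iff_add_eq_0 add.commute)
          then have "z = scale (inverse \<beta>) (- hh)" using False by (metis sinv)
          then have "z \<in> H" using hb(1) by (simp add: subsc[OF sH] subneg[OF sH])
          then show False using zH by simp
        qed
      qed
      have "distant W E" by (rule L1[OF sW s0 sE adj d0E noWE])
      moreover have "\<not> distant W E"
        using d2 E0 E1 E2 cnd WG adj n1 n2 E unfolding D2_def by blast
      ultimately show False by simp
    qed
  qed
qed

end

theorem theorem4p10:
  fixes scale :: "'k::division_ring \<Rightarrow> 'v::ab_group_add \<Rightarrow> 'v"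
    and R :: "'v set set"
  assumes "left_vector_space scale"
    and "dim_gt_2 scale"
    and "Gr scale \<noteq> {}"
    and "R \<subseteq> Gr scale"
  shows "Z_regulus scale R \<longleftrightarrow> D1 R \<and> D2 scale R \<and> D3 scale R"
proof -
  interpret lvs scale by (unfold_locales) (rule assms(1))
  have eq: "R2 scale S \<longleftrightarrow> D2 scale S" if "S \<subseteq> Gr scale" "R1 S" for S
    using R2_D2[OF assms(2) that] D2_R2[OF that] by blast
  show ?thesis
    unfolding Z_regulus_def D1_def D3_def using eq assms(4) by blast
qed

end
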